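(* Let $f(z)=z+\sum_{n=2}^{\infty}a_nz^n\in\mathcal{S}^{*}_{\rho}$ and set $$\Omega_3:=a_2(a_4a_6-a_5^2)-a_3(a_3a_6-a_4a_5)+a_4(a_3a_5-a_4^2).$$ Then $$|\Omega_3|\le \frac{221394816+55296000\sqrt{6/599}+79626240\sqrt{6/77}+185794560\sqrt{21/251}+79626240\sqrt{6/23}+5971968\sqrt{10}}{597196800}\approx 0.606922 .$$
   Context: Let $\mathbb{D}=\{z\in\mathbb{C}:|z|<1\}$. For analytic $g_1,g_2$ on $\mathbb{D}$, $g_1\prec g_2$ means there is an analytic $w:\mathbb{D}\to\mathbb{D}$ with $w(0)=0$ such that $g_1=g_2\circ w$. Here $\sinh^{-1}$ denotes the principal branch of the inverse hyperbolic sine with $\sinh^{-1}(0)=0$, analytic on $\mathbb{D}$. The class $\mathcal{S}^{*}_{\rho}$ consists of all univalent analytic functions $f$ on $\mathbb{D}$ with $f(z)=z+\sum_{n\ge2}a_nz^n$ such that $\frac{zf'(z)}{f(z)}\prec 1+\sinh^{-1}(z)$. *)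

theory Defs
  imports "HOL-Complex_Analysis.Complex_Analysis"
begin

definition coef :: "(complex \<Rightarrow> complex) \<Rightarrow> nat \<Rightarrow> complex" where
  "coef f n = (deriv ^^ n) f 0 / of_nat (fact n)"

definition subordinate :: "(complex \<Rightarrow> complex) \<Rightarrow> (complex \<Rightarrow> complex) \<Rightarrow> bool" where
  "subordinate g1 g2 \<longleftrightarrow> (\<exists>w. w holomorphic_on ball 0 1 \<and> w ` ball 0 1 \<subseteq> ball 0 1 \<and> w 0 = 0
      \<and> (\<forall>z\<in>ball 0 1. g1 z = g2 (w z)))"

text \<open>The analytic function z f'(z)/f(z), with its removable singularity at 0 filled in
  by the value 1 (since f(0)=0, f'(0)=1).\<close>
definition zf'_over_f :: "(complex \<Rightarrow> complex) \<Rightarrow> complex \<Rightarrow> complex" where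
  "zf'_over_f f z = (if z = 0 then 1 else z * deriv f z / f z)"

text \<open>The class S^*_rho (arsinh on complex is the principal branch Ln(z + (z^2+1)^(1/2))).\<close>
definition S_rho :: "(complex \<Rightarrow> complex) set" where
  "S_rho = {f. f holomorphic_on ball 0 1 \<and> inj_on f (ball 0 1) \<and> f 0 = 0 \<and> deriv f 0 = 1
      \<and> subordinate (zf'_over_f f) (\<lambda>z. 1 + arsinh z)}"

end

theory Submission imports Defs begin

lemma arsinh_csqrt: "arsinh (u::complex) = Ln (u + csqrt (u^2+1))"
  by (simp add: arsinh_def csqrt_conv_powr)

lemma sq1_not_nonpos:
  fixes u :: complex assumes "norm u < 1" shows "u^2 + 1 \<notin> \<real>\<^sub>\<le>\<^sub>0"
proof -
  have "norm (u^2) < 1" using assms by (simp add: norm_power power_less_one_iff)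
  hence "\<bar>Re (u^2)\<bar> < 1" using abs_Re_le_cmod[of "u^2"] by linarith
  hence "Re (u^2 + 1) > 0" by simp
  thus ?thesis by (simp add: complex_nonpos_Reals_iff)
qed

lemma Re_csqrt_pos:
  fixes v :: complex assumes "v \<notin> \<real>\<^sub>\<le>\<^sub>0" shows "Re (csqrt v) > 0"
proof (rule ccontr)
  assume "\<not> Re (csqrt v) > 0"
  hence r: "Re (csqrt v) = 0" using Re_csqrt[of v] by linarith
  have "v = (csqrt v)^2" by simp
  hence h: "Re v = -((Im (csqrt v))^2)" "Im v = 0" using r
    by (metis (no_types) Im_power2 Re_power2 diff_0 mult_zero_right power2_eq_square mult_zero_left)+
  have "Re v \<le> 0" using h(1) zero_le_power2[of "Im (csqrt v)"] by linarith
  hence "v \<in> \<real>\<^sub>\<le>\<^sub>0" using h(2) by (simp add: complex_nonpos_Reals_iff)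
  with assms show False by simp
qed

lemma sum_not_nonpos:
  fixes u :: complex assumes "norm u < 1" shows "u + csqrt (u^2+1) \<notin> \<real>\<^sub>\<le>\<^sub>0"
proof
  define sq where "sq = csqrt (u^2+1)"
  have sp: "Re sq > 0" using Re_csqrt_pos[OF sq1_not_nonpos[OF assms]] by (simp add: sq_def)
  have ss: "sq^2 = u^2+1" by (simp add: sq_def)
  assume "u + csqrt (u^2+1) \<in> \<real>\<^sub>\<le>\<^sub>0"
  hence a: "Re (u+sq) \<le> 0" "Im (u+sq) = 0" by (auto simp: complex_nonpos_Reals_iff sq_def)
  have prod: "(u+sq) * (sq-u) = 1" using ss by (simp add: algebra_simps power2_eq_square)
  hence nz: "u + sq \<noteq> 0" by auto
  have d: "sq - u = 1/(u+sq)" using prod nz by (simp add: field_simps)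
  have "u + sq = of_real (Re (u+sq))" using a by (simp add: complex_eq_iff)
  with nz a have neg: "Re (u+sq) < 0" by (metis less_eq_real_def of_real_0)
  have "Re (sq-u) = 1 / Re (u+sq)" unfolding d using a by (simp add: Re_divide power2_eq_square)
  hence "Re (sq - u) < 0" using neg by simp
  hence "2  *  Re sq < 0" using neg by simp
  with sp show False by simp
qed

lemma arsinh_deriv:
  fixes u :: complex assumes "norm u < 1"
  shows "(arsinh has_field_derivative 1 / csqrt (u^2+1)) (at u)"
proof -
  define sq where "sq = csqrt (u^2+1)"
  have sp: "Re sq > 0" using Re_csqrt_pos[OF sq1_not_nonpos[OF assms]] by (simp add: sq_def)
  hence snz: "sq \<noteq> 0" by auto
  have ss: "sq^2 = u^2+1" by (simp add: sq_def)
  have usnz: "u + sq \<noteq> 0" using sum_not_nonpos[OF assms] unfolding sq_def by auto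
  have d1: "((\<lambda>x. csqrt (x^2+1)) has_field_derivative inverse (2 * sq)  *  (2 * u)) (at u)"
    unfolding sq_def
    by (rule DERIV_chain2[where f=csqrt and g="\<lambda>x. x^2+1", OF has_field_derivative_csqrt[OF sq1_not_nonpos[OF assms]]])
       (auto intro!: derivative_eq_intros)
  have d2: "((\<lambda>x. Ln (x + csqrt (x^2+1))) has_field_derivative inverse (u + csqrt (u^2+1)) * (1 + inverse (2 * sq) * (2 * u))) (at u)"
    by (rule DERIV_chain2[where f=Ln and g="\<lambda>x. x + csqrt (x^2+1)", OF has_field_derivative_Ln[OF sum_not_nonpos[OF assms]]])
       (rule DERIV_add[OF DERIV_ident d1])
  hence d2: "((\<lambda>x. Ln (x + csqrt (x^2+1))) has_field_derivative inverse (u + sq) * (1 + inverse (2 * sq) * (2 * u))) (at u)"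
    by (simp add: sq_def)
  have "inverse (u+sq)  *  (1 + inverse (2 * sq)  *  (2 * u)) = 1/sq"
    using snz usnz by (simp add: field_simps)
  with d2 show ?thesis unfolding sq_def by (simp add: arsinh_csqrt[abs_def])
qed


lemma coef_schwarz:
  assumes hol: "w holomorphic_on ball 0 1" and img: "w ` ball 0 1 \<subseteq> ball 0 1" and n: "n > 0"
  shows "cmod (coef w n) \<le> 1"
proof -
  have b: "cmod (coef w n) \<le> 1 / r ^ n" if r: "0 < r" "r < 1" for r :: real
  proof -
    have "cmod ((deriv ^^ n) w 0) \<le> fact n * 1 / r ^ n"
    proof (rule Cauchy_higher_deriv_bound[where y=0])
      show "w holomorphic_on ball 0 r" using r by (intro holomorphic_on_subset[OF hol]) auto
      show "continuous_on (cball 0 r) w"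
        using r by (intro continuous_on_subset[OF holomorphic_on_imp_continuous_on[OF hol]]) auto
      show "\<And>z. z \<in> ball 0 r \<Longrightarrow> w z \<in> ball 0 1" using img r by (auto simp: subset_iff)
    qed (use r n in auto)
    thus ?thesis by (simp add: coef_def norm_divide field_simps)
  qed
  have "((\<lambda>r::real. 1 / r ^ n) \<longlongrightarrow> 1 / 1 ^ n) (at_left 1)"
    by (intro tendsto_intros) auto
  hence lim: "((\<lambda>r::real. 1 / r ^ n) \<longlongrightarrow> 1) (at_left 1)" by simp
  have ev: "eventually (\<lambda>r::real. cmod (coef w n) \<le> 1 / r ^ n) (at_left 1)"
  proof -
    have "eventually (\<lambda>r::real. r \<in> {0<..<1}) (at_left 1)"
      by (rule eventually_at_left_real) auto
    thus ?thesis by eventually_elim (use b in auto)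
  qed
  show ?thesis by (rule tendsto_le[OF _ lim tendsto_const ev]) simp
qed

lemma mx_mult0: "fps_nth (f*g) 0 = fps_nth f 0 * fps_nth g 0" for f g :: "complex fps" by (simp add: fps_mult_nth atLeast0AtMost numeral_eq_Suc)
lemma mx_mult1: "fps_nth (f*g) 1 = fps_nth f 0 * fps_nth g 1 + fps_nth f 1 * fps_nth g 0" for f g :: "complex fps" by (simp add: fps_mult_nth atLeast0AtMost numeral_eq_Suc)
lemma mx_mult2: "fps_nth (f*g) 2 = fps_nth f 0 * fps_nth g 2 + fps_nth f 1 * fps_nth g 1 + fps_nth f 2 * fps_nth g 0" for f g :: "complex fps" by (simp add: fps_mult_nth atLeast0AtMost numeral_eq_Suc)
lemma mx_mult3: "fps_nth (f*g) 3 = fps_nth f 0 * fps_nth g 3 + fps_nth f 1 * fps_nth g 2 + fps_nth f 2 * fps_nth g 1 + fps_nth f 3 * fps_nth g 0" for f g :: "complex fps" by (simp add: fps_mult_nth atLeast0AtMost numeral_eq_Suc)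
lemma mx_mult4: "fps_nth (f*g) 4 = fps_nth f 0 * fps_nth g 4 + fps_nth f 1 * fps_nth g 3 + fps_nth f 2 * fps_nth g 2 + fps_nth f 3 * fps_nth g 1 + fps_nth f 4 * fps_nth g 0" for f g :: "complex fps" by (simp add: fps_mult_nth atLeast0AtMost numeral_eq_Suc)
lemma mx_mult5: "fps_nth (f*g) 5 = fps_nth f 0 * fps_nth g 5 + fps_nth f 1 * fps_nth g 4 + fps_nth f 2 * fps_nth g 3 + fps_nth f 3 * fps_nth g 2 + fps_nth f 4 * fps_nth g 1 + fps_nth f 5 * fps_nth g 0" for f g :: "complex fps" by (simp add: fps_mult_nth atLeast0AtMost numeral_eq_Suc)
lemma mx_mult6: "fps_nth (f*g) 6 = fps_nth f 0 * fps_nth g 6 + fps_nth f 1 * fps_nth g 5 + fps_nth f 2 * fps_nth g 4 + fps_nth f 3 * fps_nth g 3 + fps_nth f 4 * fps_nth g 2 + fps_nth f 5 * fps_nth g 1 + fps_nth f 6 * fps_nth g 0" for f g :: "complex fps" by (simp add: fps_mult_nth atLeast0AtMost numeral_eq_Suc)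
lemma mx_der0: "fps_nth (fps_deriv f) 0 = 1 * fps_nth f 1" for f :: "complex fps" by (simp add: fps_deriv_nth numeral_eq_Suc)
lemma mx_der1: "fps_nth (fps_deriv f) 1 = 2 * fps_nth f 2" for f :: "complex fps" by (simp add: fps_deriv_nth numeral_eq_Suc)
lemma mx_der2: "fps_nth (fps_deriv f) 2 = 3 * fps_nth f 3" for f :: "complex fps" by (simp add: fps_deriv_nth numeral_eq_Suc)
lemma mx_der3: "fps_nth (fps_deriv f) 3 = 4 * fps_nth f 4" for f :: "complex fps" by (simp add: fps_deriv_nth numeral_eq_Suc)
lemma mx_der4: "fps_nth (fps_deriv f) 4 = 5 * fps_nth f 5" for f :: "complex fps" by (simp add: fps_deriv_nth numeral_eq_Suc)
lemma mx_der5: "fps_nth (fps_deriv f) 5 = 6 * fps_nth f 6" for f :: "complex fps" by (simp add: fps_deriv_nth numeral_eq_Suc)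
lemma mx_der6: "fps_nth (fps_deriv f) 6 = 7 * fps_nth f 7" for f :: "complex fps" by (simp add: fps_deriv_nth numeral_eq_Suc)
lemma mx_X1: "fps_nth (fps_X * f) 1 = fps_nth f 0" for f :: "complex fps" by (simp add: fps_X_mult_nth numeral_eq_Suc)
lemma mx_X2: "fps_nth (fps_X * f) 2 = fps_nth f 1" for f :: "complex fps" by (simp add: fps_X_mult_nth numeral_eq_Suc)
lemma mx_X3: "fps_nth (fps_X * f) 3 = fps_nth f 2" for f :: "complex fps" by (simp add: fps_X_mult_nth numeral_eq_Suc)
lemma mx_X4: "fps_nth (fps_X * f) 4 = fps_nth f 3" for f :: "complex fps" by (simp add: fps_X_mult_nth numeral_eq_Suc)
lemma mx_X5: "fps_nth (fps_X * f) 5 = fps_nth f 4" for f :: "complex fps" by (simp add: fps_X_mult_nth numeral_eq_Suc)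
lemma mx_X6: "fps_nth (fps_X * f) 6 = fps_nth f 5" for f :: "complex fps" by (simp add: fps_X_mult_nth numeral_eq_Suc)
lemma mx_mult1': "fps_nth (f*g) (Suc 0) = fps_nth f 0 * fps_nth g 1 + fps_nth f 1 * fps_nth g 0" for f g :: "complex fps" by (simp add: fps_mult_nth atLeast0AtMost numeral_eq_Suc)
lemma mx_der1': "fps_nth (fps_deriv f) (Suc 0) = 2 * fps_nth f 2" for f :: "complex fps" by (simp add: fps_deriv_nth numeral_eq_Suc)
lemma mx_X1': "fps_nth (fps_X * f) (Suc 0) = fps_nth f 0" for f :: "complex fps" by (simp add: fps_X_mult_nth numeral_eq_Suc)
lemmas mx = mx_mult1' mx_der1' mx_X1' mx_mult0 mx_mult1 mx_mult2 mx_mult3 mx_mult4 mx_mult5 mx_mult6 mx_der0 mx_der1 mx_der2 mx_der3 mx_der4 mx_der5 mx_der6 mx_X1 mx_X2 mx_X3 mx_X4 mx_X5 mx_X6 fps_add_nth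
lemma alg_solve:
  fixes w1 w2 w3 w4 w5 s2 s3 s4 s5 q1 q2 q3 q4 q5 a2 a3 a4 a5 a6 :: complex
  assumes e0: "1 * s2 + s2 * 1 = w1 * w1"
    and e1: "1 * s3 + s3 * 1 = w1 * w2 + w2 * w1"
    and e2: "1 * s4 + s2 * s2 + s4 * 1 = w1 * w3 + w2 * w2 + w3 * w1"
    and e3: "1 * s5 + s2 * s3 + s3 * s2 + s5 * 1 = w1 * w4 + w2 * w3 + w3 * w2 + w4 * w1"
    and e4: "1 * (1 * q1) = 1 * w1"
    and e5: "1 * (2 * q2) = 2 * w2"
    and e6: "1 * (3 * q3) + s2 * (1 * q1) = 3 * w3"
    and e7: "1 * (4 * q4) + s2 * (2 * q2) + s3 * (1 * q1) = 4 * w4"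
    and e8: "1 * (5 * q5) + s2 * (3 * q3) + s3 * (2 * q2) + s4 * (1 * q1) = 5 * w5"
    and e9: "2 * a2 = 1 * q1 + a2 * 1"
    and e10: "3 * a3 = 1 * q2 + a2 * q1 + a3 * 1"
    and e11: "4 * a4 = 1 * q3 + a2 * q2 + a3 * q1 + a4 * 1"
    and e12: "5 * a5 = 1 * q4 + a2 * q3 + a3 * q2 + a4 * q1 + a5 * 1"
    and e13: "6 * a6 = 1 * q5 + a2 * q4 + a3 * q3 + a4 * q2 + a5 * q1 + a6 * 1"
  shows "1 * a2 = w1 \<and> 2 * a3 = w2 + w1^2 \<and> 18 * a4 = 6 * w3 + 9 * w1 * w2 + 2 * w1^3 \<and> 72 * a5 = 18 * w4 + 9 * w2^2 + 24 * w1 * w3 + 9 * w1^2 * w2 - w1^4 \<and> 1800 * a6 = 360 * w5 + 300 * w2 * w3 + 450 * w1 * w4 + 45 * w1 * w2^2 + 120 * w1^2 * w3 - 125 * w1^3 * w2 - 8 * w1^5"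
proof -
  have s2: "2 * s2 = w1^2" using e0 by algebra
  have s3: "1 * s3 = w1 * w2" using e1 s2 by algebra
  have s4: "8 * s4 = 4 * w2^2 + 8 * w1 * w3 - w1^4" using e2 s2 s3 by algebra
  have s5: "2 * s5 = 2 * w2 * w3 + 2 * w1 * w4 - w1^3 * w2" using e3 s2 s3 s4 by algebra
  have q1: "1 * q1 = w1" using e4 s2 s3 s4 s5 by algebra
  have q2: "1 * q2 = w2" using e5 s2 s3 s4 s5 q1 by algebra
  have q3: "6 * q3 = 6 * w3 - w1^3" using e6 s2 s3 s4 s5 q1 q2 by algebra
  have q4: "2 * q4 = 2 * w4 - w1^2 * w2" using e7 s2 s3 s4 s5 q1 q2 q3 by algebra
  have q5: "40 * q5 = 40 * w5 - 20 * w1 * w2^2 - 20 * w1^2 * w3 + 3 * w1^5" using e8 s2 s3 s4 s5 q1 q2 q3 q4 by algebra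
  have a2: "1 * a2 = w1" using e9 s2 s3 s4 s5 q1 q2 q3 q4 q5 by algebra
  have a3: "2 * a3 = w2 + w1^2" using e10 s2 s3 s4 s5 q1 q2 q3 q4 q5 a2 by algebra
  have a4: "18 * a4 = 6 * w3 + 9 * w1 * w2 + 2 * w1^3" using e11 s2 s3 s4 s5 q1 q2 q3 q4 q5 a2 a3 by algebra
  have a5: "72 * a5 = 18 * w4 + 9 * w2^2 + 24 * w1 * w3 + 9 * w1^2 * w2 - w1^4" using e12 s2 s3 s4 s5 q1 q2 q3 q4 q5 a2 a3 a4 by algebra
  have a6: "1800 * a6 = 360 * w5 + 300 * w2 * w3 + 450 * w1 * w4 + 45 * w1 * w2^2 + 120 * w1^2 * w3 - 125 * w1^3 * w2 - 8 * w1^5" using e13 s2 s3 s4 s5 q1 q2 q3 q4 q5 a2 a3 a4 a5 by algebra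
  show ?thesis using a2 a3 a4 a5 a6 by blast
qed
lemma fps_solve:
  fixes W S Q A :: "complex fps"
  assumes E1: "S*S = 1 + W*W" and E2: "S * fps_deriv Q = fps_deriv W"
    and E3: "fps_X * fps_deriv A = A * (1 + Q)"
    and w0: "fps_nth W 0 = 0" and q0: "fps_nth Q 0 = 0" and s0: "fps_nth S 0 = 1" and a0: "fps_nth A 0 = 0" and a1: "fps_nth A 1 = 1"
  shows "1 * fps_nth A 2 = fps_nth W 1 \<and> 2 * fps_nth A 3 = fps_nth W 2 + fps_nth W 1^2 \<and> 18 * fps_nth A 4 = 6 * fps_nth W 3 + 9 * fps_nth W 1 * fps_nth W 2 + 2 * fps_nth W 1^3 \<and> 72 * fps_nth A 5 = 18 * fps_nth W 4 + 9 * fps_nth W 2^2 + 24 * fps_nth W 1 * fps_nth W 3 + 9 * fps_nth W 1^2 * fps_nth W 2 - fps_nth W 1^4 \<and> 1800 * fps_nth A 6 = 360 * fps_nth W 5 + 300 * fps_nth W 2 * fps_nth W 3 + 450 * fps_nth W 1 * fps_nth W 4 + 45 * fps_nth W 1 * fps_nth W 2^2 + 120 * fps_nth W 1^2 * fps_nth W 3 - 125 * fps_nth W 1^3 * fps_nth W 2 - 8 * fps_nth W 1^5"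
proof -
  have "fps_nth (S*S) 1 = fps_nth (1+W*W) 1" using E1 by simp
  hence s1: "fps_nth S 1 = 0" using w0 s0 by (simp add: mx del: fps_deriv_nth)
  have "fps_nth (S*S) 2 = fps_nth (1+W*W) 2" using E1 by simp
  hence e0: "1 * fps_nth S 2 + fps_nth S 2 * 1 = fps_nth W 1 * fps_nth W 1" using w0 q0 s0 a0 a1 s1 by (simp add: mx del: fps_deriv_nth)
  have "fps_nth (S*S) 3 = fps_nth (1+W*W) 3" using E1 by simp
  hence e1: "1 * fps_nth S 3 + fps_nth S 3 * 1 = fps_nth W 1 * fps_nth W 2 + fps_nth W 2 * fps_nth W 1" using w0 q0 s0 a0 a1 s1 by (simp add: mx del: fps_deriv_nth)
  have "fps_nth (S*S) 4 = fps_nth (1+W*W) 4" using E1 by simp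
  hence e2: "1 * fps_nth S 4 + fps_nth S 2 * fps_nth S 2 + fps_nth S 4 * 1 = fps_nth W 1 * fps_nth W 3 + fps_nth W 2 * fps_nth W 2 + fps_nth W 3 * fps_nth W 1" using w0 q0 s0 a0 a1 s1 by (simp add: mx del: fps_deriv_nth)
  have "fps_nth (S*S) 5 = fps_nth (1+W*W) 5" using E1 by simp
  hence e3: "1 * fps_nth S 5 + fps_nth S 2 * fps_nth S 3 + fps_nth S 3 * fps_nth S 2 + fps_nth S 5 * 1 = fps_nth W 1 * fps_nth W 4 + fps_nth W 2 * fps_nth W 3 + fps_nth W 3 * fps_nth W 2 + fps_nth W 4 * fps_nth W 1" using w0 q0 s0 a0 a1 s1 by (simp add: mx del: fps_deriv_nth)
  have "fps_nth (S * fps_deriv Q) 0 = fps_nth (fps_deriv W) 0" using E2 by simp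
  hence e4: "1 * (1 * fps_nth Q 1) = 1 * fps_nth W 1" using w0 q0 s0 a0 a1 s1 by (simp add: mx del: fps_deriv_nth)
  have "fps_nth (S * fps_deriv Q) 1 = fps_nth (fps_deriv W) 1" using E2 by simp
  hence e5: "1 * (2 * fps_nth Q 2) = 2 * fps_nth W 2" using w0 q0 s0 a0 a1 s1 by (simp add: mx del: fps_deriv_nth)
  have "fps_nth (S * fps_deriv Q) 2 = fps_nth (fps_deriv W) 2" using E2 by simp
  hence e6: "1 * (3 * fps_nth Q 3) + fps_nth S 2 * (1 * fps_nth Q 1) = 3 * fps_nth W 3" using w0 q0 s0 a0 a1 s1 by (simp add: mx del: fps_deriv_nth)
  have "fps_nth (S * fps_deriv Q) 3 = fps_nth (fps_deriv W) 3" using E2 by simp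
  hence e7: "1 * (4 * fps_nth Q 4) + fps_nth S 2 * (2 * fps_nth Q 2) + fps_nth S 3 * (1 * fps_nth Q 1) = 4 * fps_nth W 4" using w0 q0 s0 a0 a1 s1 by (simp add: mx del: fps_deriv_nth)
  have "fps_nth (S * fps_deriv Q) 4 = fps_nth (fps_deriv W) 4" using E2 by simp
  hence e8: "1 * (5 * fps_nth Q 5) + fps_nth S 2 * (3 * fps_nth Q 3) + fps_nth S 3 * (2 * fps_nth Q 2) + fps_nth S 4 * (1 * fps_nth Q 1) = 5 * fps_nth W 5" using w0 q0 s0 a0 a1 s1 by (simp add: mx del: fps_deriv_nth)
  have "fps_nth (fps_X * fps_deriv A) 2 = fps_nth (A * (1 + Q)) 2" using E3 by simp
  hence e9: "2 * fps_nth A 2 = 1 * fps_nth Q 1 + fps_nth A 2 * 1" using w0 q0 s0 a0 a1 s1 by (simp add: mx del: fps_deriv_nth)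
  have "fps_nth (fps_X * fps_deriv A) 3 = fps_nth (A * (1 + Q)) 3" using E3 by simp
  hence e10: "3 * fps_nth A 3 = 1 * fps_nth Q 2 + fps_nth A 2 * fps_nth Q 1 + fps_nth A 3 * 1" using w0 q0 s0 a0 a1 s1 by (simp add: mx del: fps_deriv_nth)
  have "fps_nth (fps_X * fps_deriv A) 4 = fps_nth (A * (1 + Q)) 4" using E3 by simp
  hence e11: "4 * fps_nth A 4 = 1 * fps_nth Q 3 + fps_nth A 2 * fps_nth Q 2 + fps_nth A 3 * fps_nth Q 1 + fps_nth A 4 * 1" using w0 q0 s0 a0 a1 s1 by (simp add: mx del: fps_deriv_nth)
  have "fps_nth (fps_X * fps_deriv A) 5 = fps_nth (A * (1 + Q)) 5" using E3 by simp
  hence e12: "5 * fps_nth A 5 = 1 * fps_nth Q 4 + fps_nth A 2 * fps_nth Q 3 + fps_nth A 3 * fps_nth Q 2 + fps_nth A 4 * fps_nth Q 1 + fps_nth A 5 * 1" using w0 q0 s0 a0 a1 s1 by (simp add: mx del: fps_deriv_nth)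
  have "fps_nth (fps_X * fps_deriv A) 6 = fps_nth (A * (1 + Q)) 6" using E3 by simp
  hence e13: "6 * fps_nth A 6 = 1 * fps_nth Q 5 + fps_nth A 2 * fps_nth Q 4 + fps_nth A 3 * fps_nth Q 3 + fps_nth A 4 * fps_nth Q 2 + fps_nth A 5 * fps_nth Q 1 + fps_nth A 6 * 1" using w0 q0 s0 a0 a1 s1 by (simp add: mx del: fps_deriv_nth)
  show ?thesis by (rule alg_solve[OF e0 e1 e2 e3 e4 e5 e6 e7 e8 e9 e10 e11 e12 e13])
qed
lemma tri: "cmod a \<le> A \<Longrightarrow> cmod b \<le> B \<Longrightarrow> cmod (a + b) \<le> A + B"
  using norm_triangle_le[of a b "A+B"] norm_triangle_ineq[of a b] by linarith

lemma nb1: "cmod x \<le> 1 \<Longrightarrow> cmod (x ^ n) \<le> 1"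
  by (simp add: norm_power power_le_one)

lemma nbm: "cmod x \<le> 1 \<Longrightarrow> cmod y \<le> 1 \<Longrightarrow> cmod (x * y) \<le> 1"
  by (simp add: norm_mult mult_le_one)

lemma nbc: "cmod m \<le> 1 \<Longrightarrow> cmod (numeral k * m) \<le> numeral k"
  by (simp add: norm_mult mult_left_le)

lemma nbneg: "cmod m \<le> 1 \<Longrightarrow> cmod ((- numeral k) * m) \<le> numeral k"
  by (simp add: norm_mult mult_left_le)
lemma om_identity:
  fixes w1 w2 w3 w4 w5 a2 a3 a4 a5 a6 :: complex
  assumes "1 * a2 = w1" "2 * a3 = w2 + w1^2" "18 * a4 = 6 * w3 + 9 * w1 * w2 + 2 * w1^3" "72 * a5 = 18 * w4 + 9 * w2^2 + 24 * w1 * w3 + 9 * w1^2 * w2 - w1^4" "1800 * a6 = 360 * w5 + 300 * w2 * w3 + 450 * w1 * w4 + 45 * w1 * w2^2 + 120 * w1^2 * w3 - 125 * w1^3 * w2 - 8 * w1^5"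
  shows "1166400 * (a2 * (a4 * a6 - a5^2) - a3 * (a3 * a6 - a4 * a5) + a4 * (a3 * a5 - a4^2)) = (- 43200) * (w3^3) + 97200 * (w2 * w3 * w4) + (- 58320) * (w2^2 * w5) + (- 72900) * (w1 * w4^2) + 77760 * (w1 * w3 * w5) + 47385 * (w1 * w2^4) + (- 106920) * (w1^2 * w2^2 * w3) + (- 17280) * (w1^3 * w3^2) + 105300 * (w1^3 * w2 * w4) + (- 32400) * (w1^4 * w5) + (- 16929) * (w1^5 * w2^2) + 21672 * (w1^6 * w3) + (- 2905) * (w1^9)"
proof -
  have "1166400 * (a2 * (a4 * a6 - a5^2) - a3 * (a3 * a6 - a4 * a5) + a4 * (a3 * a5 - a4^2))
     = 36 * (1 * a2) * (18 * a4) * (1800 * a6) - 225 * (1 * a2) * (72 * a5)^2 - 162 * (2 * a3)^2 * (1800 * a6)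
       + 900 * (2 * a3) * (18 * a4) * (72 * a5) - 200 * (18 * a4)^3" by algebra
  also have "\<dots> = 36 * (w1) * (6 * w3 + 9 * w1 * w2 + 2 * w1^3) * (360 * w5 + 300 * w2 * w3 + 450 * w1 * w4 + 45 * w1 * w2^2 + 120 * w1^2 * w3 - 125 * w1^3 * w2 - 8 * w1^5)
       - 225 * (w1) * (18 * w4 + 9 * w2^2 + 24 * w1 * w3 + 9 * w1^2 * w2 - w1^4)^2
       - 162 * (w2 + w1^2)^2 * (360 * w5 + 300 * w2 * w3 + 450 * w1 * w4 + 45 * w1 * w2^2 + 120 * w1^2 * w3 - 125 * w1^3 * w2 - 8 * w1^5)
       + 900 * (w2 + w1^2) * (6 * w3 + 9 * w1 * w2 + 2 * w1^3) * (18 * w4 + 9 * w2^2 + 24 * w1 * w3 + 9 * w1^2 * w2 - w1^4)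
       - 200 * (6 * w3 + 9 * w1 * w2 + 2 * w1^3)^3" unfolding assms ..
  also have "\<dots> = (- 43200) * (w3^3) + 97200 * (w2 * w3 * w4) + (- 58320) * (w2^2 * w5) + (- 72900) * (w1 * w4^2) + 77760 * (w1 * w3 * w5) + 47385 * (w1 * w2^4) + (- 106920) * (w1^2 * w2^2 * w3) + (- 17280) * (w1^3 * w3^2) + 105300 * (w1^3 * w2 * w4) + (- 32400) * (w1^4 * w5) + (- 16929) * (w1^5 * w2^2) + 21672 * (w1^6 * w3) + (- 2905) * (w1^9)" by algebra
  finally show ?thesis .
qed

lemma om_bound:
  fixes w1 w2 w3 w4 w5 :: complex
  assumes "cmod w1 \<le> 1" "cmod w2 \<le> 1" "cmod w3 \<le> 1" "cmod w4 \<le> 1" "cmod w5 \<le> 1"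
  shows "cmod ((- 43200) * (w3^3) + 97200 * (w2 * w3 * w4) + (- 58320) * (w2^2 * w5) + (- 72900) * (w1 * w4^2) + 77760 * (w1 * w3 * w5) + 47385 * (w1 * w2^4) + (- 106920) * (w1^2 * w2^2 * w3) + (- 17280) * (w1^3 * w3^2) + 105300 * (w1^3 * w2 * w4) + (- 32400) * (w1^4 * w5) + (- 16929) * (w1^5 * w2^2) + 21672 * (w1^6 * w3) + (- 2905) * (w1^9)) \<le> 43200 + 97200 + 58320 + 72900 + 77760 + 47385 + 106920 + 17280 + 105300 + 32400 + 16929 + 21672 + 2905"
  by (intro tri nbc nbneg nbm nb1 assms)

lemma numeric_bound:
  "(700171::real) / 1166400 \<le> (221394816 + 55296000 * sqrt (6/599) + 79626240 * sqrt (6/77)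
             + 185794560 * sqrt (21/251) + 79626240 * sqrt (6/23) + 5971968 * sqrt 10) / 597196800"
proof -
  have a: "1/10 \<le> sqrt (6/599::real)" by (rule real_le_rsqrt) (simp add: power2_eq_square)
  have b: "279/1000 \<le> sqrt (6/77::real)" by (rule real_le_rsqrt) (simp add: power2_eq_square)
  have c: "289/1000 \<le> sqrt (21/251::real)" by (rule real_le_rsqrt) (simp add: power2_eq_square)
  have d: "51/100 \<le> sqrt (6/23::real)" by (rule real_le_rsqrt) (simp add: power2_eq_square)
  have e: "316/100 \<le> sqrt (10::real)" by (rule real_le_rsqrt) (simp add: power2_eq_square)
  show ?thesis using a b c d e by (simp add: divide_simps)
qed

theorem mainTheorem8:
  fixes f :: "complex \<Rightarrow> complex"
  assumes "f \<in> S_rho"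
  shows "cmod (coef f 2 * (coef f 4 * coef f 6 - (coef f 5)^2)
              - coef f 3 * (coef f 3 * coef f 6 - coef f 4 * coef f 5)
              + coef f 4 * (coef f 3 * coef f 5 - (coef f 4)^2))
         \<le> (221394816 + 55296000 * sqrt (6/599) + 79626240 * sqrt (6/77)
             + 185794560 * sqrt (21/251) + 79626240 * sqrt (6/23) + 5971968 * sqrt 10) / 597196800"
proof -
  from assms have holf: "f holomorphic_on ball 0 1" and inj: "inj_on f (ball 0 1)"
    and f0: "f 0 = 0" and f'0: "deriv f 0 = 1"
    and sub: "subordinate (zf'_over_f f) (\<lambda>z. 1 + arsinh z)"
    by (auto simp: S_rho_def)
  from sub obtain w where holw: "w holomorphic_on ball 0 1" and wimg: "w ` ball 0 1 \<subseteq> ball 0 1"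
    and w0: "w 0 = 0" and wsub: "\<forall>z\<in>ball 0 1. zf'_over_f f z = 1 + arsinh (w z)"
    unfolding subordinate_def by blast
  have wn: "norm (w z) < 1" if "z \<in> ball 0 1" for z using wimg that by (auto simp: subset_iff)
  define R where "R = (\<lambda>z. csqrt ((w z)^2 + 1))"
  define Qf where "Qf = (\<lambda>z. arsinh (w z))"
  have holR: "R holomorphic_on ball 0 1" unfolding R_def
    by (intro holomorphic_on_csqrt' holomorphic_intros holw) (use sq1_not_nonpos wn in auto)
  have dQ: "(Qf has_field_derivative (1 / R z) * deriv w z) (at z)" if "z \<in> ball 0 1" for z
    unfolding Qf_def R_def
    by (rule DERIV_chain2[where f=arsinh and g=w, OF arsinh_deriv[OF wn[OF that]] holomorphic_derivI[OF holw open_ball that]])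
  have holQ: "Qf holomorphic_on ball 0 1"
    unfolding holomorphic_on_open[OF open_ball] using dQ by blast
  have Rnz: "R z \<noteq> 0" if "z \<in> ball 0 1" for z
  proof -
    have "Re (R z) > 0" unfolding R_def by (rule Re_csqrt_pos[OF sq1_not_nonpos[OF wn[OF that]]])
    thus ?thesis by (metis less_irrefl zero_complex.sel(1))
  qed
  have eq1: "R z * R z = 1 + w z * w z" for z
    unfolding R_def by (metis power2_csqrt power2_eq_square add.commute)
  have eq2: "R z * deriv Qf z = deriv w z" if "z \<in> ball 0 1" for z
    using DERIV_imp_deriv[OF dQ[OF that]] Rnz[OF that] by simp
  have eq3: "z * deriv f z = f z * (1 + Qf z)" if z: "z \<in> ball 0 1" for z
  proof (cases "z = 0")
    case True thus ?thesis by (simp add: f0)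
  next
    case False
    have "f z \<noteq> 0"
    proof
      assume "f z = 0"
      hence "f z = f 0" by (simp add: f0)
      with inj z have "z = 0" by (auto dest: inj_onD)
      with False show False by simp
    qed
    moreover have "z * deriv f z / f z = 1 + arsinh (w z)"
      using bspec[OF wsub z] False by (simp add: zf'_over_f_def)
    ultimately show ?thesis by (simp add: Qf_def field_simps)
  qed
  define W where "W = fps_expansion w 0"
  define A where "A = fps_expansion f 0"
  define S where "S = fps_expansion R 0"
  define Q where "Q = fps_expansion Qf 0"
  have hW: "w has_fps_expansion W" unfolding W_def by (rule has_fps_expansion_fps_expansion[OF open_ball _ holw]) simp
  have hA: "f has_fps_expansion A" unfolding A_def by (rule has_fps_expansion_fps_expansion[OF open_ball _ holf]) simp
  have hS: "R has_fps_expansion S" unfolding S_def by (rule has_fps_expansion_fps_expansion[OF open_ball _ holR]) simp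
  have hQ: "Qf has_fps_expansion Q" unfolding Q_def by (rule has_fps_expansion_fps_expansion[OF open_ball _ holQ]) simp
  have ev: "eventually (\<lambda>z. z \<in> ball 0 1) (nhds (0::complex))"
    by (intro eventually_nhds_in_open) auto
  have E1: "S*S = 1 + W*W"
  proof -
    have "(\<lambda>z. R z * R z) has_fps_expansion S*S" by (intro has_fps_expansion_mult hS)
    moreover have "(\<lambda>z. 1 + w z * w z) has_fps_expansion 1 + W*W"
      by (intro has_fps_expansion_add has_fps_expansion_mult hW has_fps_expansion_1)
    hence "(\<lambda>z. R z * R z) has_fps_expansion 1 + W*W"
      by (subst has_fps_expansion_cong[where g="\<lambda>z. 1 + w z * w z" and G="1+W*W"]) (use eq1 in auto)
    ultimately show ?thesis by (rule fps_expansion_unique_complex)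
  qed
  have E2: "S * fps_deriv Q = fps_deriv W"
  proof -
    have "(\<lambda>z. R z * deriv Qf z) has_fps_expansion S * fps_deriv Q"
      by (intro has_fps_expansion_mult hS has_fps_expansion_deriv hQ)
    moreover have "deriv w has_fps_expansion fps_deriv W" by (intro has_fps_expansion_deriv hW)
    hence "(\<lambda>z. R z * deriv Qf z) has_fps_expansion fps_deriv W"
      by (subst has_fps_expansion_cong[where g="deriv w" and G="fps_deriv W"])
         (use eq2 in \<open>auto intro: eventually_mono[OF ev]\<close>)
    ultimately show ?thesis by (rule fps_expansion_unique_complex)
  qed
  have E3: "fps_X * fps_deriv A = A * (1 + Q)"
  proof -
    have "(\<lambda>z. z * deriv f z) has_fps_expansion fps_X * fps_deriv A"
      by (intro has_fps_expansion_mult has_fps_expansion_fps_X has_fps_expansion_deriv hA)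
    moreover have "(\<lambda>z. f z * (1 + Qf z)) has_fps_expansion A * (1 + Q)"
      by (intro has_fps_expansion_mult has_fps_expansion_add hA has_fps_expansion_1 hQ)
    hence "(\<lambda>z. z * deriv f z) has_fps_expansion A * (1 + Q)"
      by (subst has_fps_expansion_cong[where g="\<lambda>z. f z * (1 + Qf z)" and G="A * (1 + Q)"])
         (use eq3 in \<open>auto intro: eventually_mono[OF ev]\<close>)
    ultimately show ?thesis by (rule fps_expansion_unique_complex)
  qed
  have iW: "fps_nth W 0 = 0" by (simp add: W_def fps_expansion_def w0)
  have iQ: "fps_nth Q 0 = 0" by (simp add: Q_def Qf_def fps_expansion_def w0)
  have iS: "fps_nth S 0 = 1" by (simp add: S_def R_def fps_expansion_def w0)
  have iA0: "fps_nth A 0 = 0" by (simp add: A_def fps_expansion_def f0)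
  have iA1: "fps_nth A 1 = 1" by (simp add: A_def fps_expansion_def f'0)
  note sol = fps_solve[OF E1 E2 E3 iW iQ iS iA0 iA1]
  have cA: "coef f n = fps_nth A n" for n by (simp add: A_def fps_expansion_def coef_def)
  have wb: "cmod (fps_nth W k) \<le> 1" if "k > 0" for k
    using coef_schwarz[OF holw wimg that] by (simp add: W_def fps_expansion_def coef_def)
  note idt = om_identity[OF conjunct1[OF sol] conjunct1[OF conjunct2[OF sol]] conjunct1[OF conjunct2[OF conjunct2[OF sol]]]
    conjunct1[OF conjunct2[OF conjunct2[OF conjunct2[OF sol]]]] conjunct2[OF conjunct2[OF conjunct2[OF conjunct2[OF sol]]]]]
  note bd = om_bound[OF wb wb wb wb wb, of 1 2 3 4 5, simplified]
  let ?Om = "fps_nth A 2 * (fps_nth A 4 * fps_nth A 6 - (fps_nth A 5)^2)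
              - fps_nth A 3 * (fps_nth A 3 * fps_nth A 6 - fps_nth A 4 * fps_nth A 5)
              + fps_nth A 4 * (fps_nth A 3 * fps_nth A 5 - (fps_nth A 4)^2)"
  have "cmod (1166400 * ?Om) \<le> 700171" using idt bd by simp
  moreover have "cmod (1166400 * ?Om) = 1166400 * cmod ?Om" by (subst norm_mult) simp
  ultimately have "cmod ?Om \<le> 700171 / 1166400" by linarith
  thus ?thesis unfolding cA using numeric_bound by linarith
qed
end
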